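(* Let $f_i:\mathbb{R}^p\to\mathbb{R}$, $1\le i\le n$, be $L_i$-smooth for some $L_i>0$, and suppose $f=\frac1n\sum_{i=1}^nf_i$ takes the form $f(x)=g(Hx)$ for an $\alpha$-strongly convex ($\alpha>0$) and $\mathbf{L}$-smooth function $g:\mathbb{R}^m\to\mathbb{R}$ and $H\in\mathbb{R}^{m\times p}$, and that the set $X^*$ of minimizers of $f$ is nonempty. Assume one of the following holds: (1) each $f_i$ is bounded below, $1\le i\le n$; (2) $f_i(x)=f_i(x+v)$ for all $x\in\mathbb{R}^p$, all $v\in\mathrm{Ker}(H)$ and all $1\le i\le n$. Then $$\sup_{x\in X^*}\Big(\sum_{j=1}^n\|\nabla f_j(x)\|^2\Big)^{1/2}<\infty.$$
   Context: $h$ is $L$-smooth if $\|\nabla h(x)-\nabla h(y)\|\le L\|x-y\|$ for all $x,y$; $\alpha$-strongly convex if $h(y)\ge h(x)+\langle y-x,\nabla h(x)\rangle+\frac\alpha2\|y-x\|^2$ for all $x,y$. $X^*=\{x\in\mathbb{R}^p: f(x)=\min f\}$. Norms are Euclidean. *)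

theory Defs
  imports "HOL-Analysis.Analysis"
begin

definition grad :: "('a::euclidean_space \<Rightarrow> real) \<Rightarrow> 'a \<Rightarrow> 'a" where
  "grad f x = (SOME v. (f has_derivative (\<lambda>h. v \<bullet> h)) (at x))"

definition smooth :: "real \<Rightarrow> ('a::euclidean_space \<Rightarrow> real) \<Rightarrow> bool" where
  "smooth L f \<longleftrightarrow> (\<forall>x. f differentiable (at x)) \<and>
     (\<forall>x y. norm (grad f x - grad f y) \<le> L * norm (x - y))"

definition strongly_convex :: "real \<Rightarrow> ('a::euclidean_space \<Rightarrow> real) \<Rightarrow> bool" where
  "strongly_convex \<alpha> h \<longleftrightarrow>
     (\<forall>x y. h y \<ge> h x + (y - x) \<bullet> grad h x + \<alpha> / 2 * (norm (y - x))\<^sup>2)"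

definition minimizers :: "('a \<Rightarrow> real) \<Rightarrow> 'a set" where
  "minimizers f = {x. \<forall>y. f x \<le> f y}"

end

theory Submission
  imports Defs
begin

lemma grad_has_derivative:
  fixes f :: "'a::euclidean_space \<Rightarrow> real"
  assumes "f differentiable (at x)"
  shows "(f has_derivative (\<lambda>h. grad f x \<bullet> h)) (at x)"
proof -
  obtain f' where f': "(f has_derivative f') (at x)"
    using assms unfolding differentiable_def by blast
  have lin: "linear f'" using f' has_derivative_linear by blast
  define v where "v = (\<Sum>b\<in>Basis. f' b *\<^sub>R b)"
  have "f' = (\<lambda>h. v \<bullet> h)"
  proof
    fix h
    have "f' h = f' (\<Sum>b\<in>Basis. (h \<bullet> b) *\<^sub>R b)" by (simp add: euclidean_representation)
    also have "\<dots> = (\<Sum>b\<in>Basis. (h \<bullet> b) * f' b)"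
      using lin by (simp add: linear_sum linear_scale)
    also have "\<dots> = v \<bullet> h" unfolding v_def by (simp add: inner_sum_right inner_commute mult.commute)
    finally show "f' h = v \<bullet> h" .
  qed
  then have "\<exists>v. (f has_derivative (\<lambda>h. v \<bullet> h)) (at x)" using f' by blast
  then show ?thesis unfolding grad_def by (rule someI_ex)
qed

lemma grad_unique:
  fixes f :: "'a::euclidean_space \<Rightarrow> real"
  assumes "(f has_derivative (\<lambda>h. D \<bullet> h)) (at x)"
  shows "grad f x = D"
proof -
  have "f differentiable (at x)" using assms unfolding differentiable_def by blast
  then have "(f has_derivative (\<lambda>h. grad f x \<bullet> h)) (at x)" by (rule grad_has_derivative)
  then have e: "(\<lambda>h. grad f x \<bullet> h) = (\<lambda>h. D \<bullet> h)" using assms by (rule has_derivative_unique)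
  have "(grad f x - D) \<bullet> (grad f x - D) = 0"
    using fun_cong[OF e, of "grad f x - D"] by (simp add: inner_diff_left)
  then show ?thesis by simp
qed


lemma smooth_grad_bound:
  fixes h :: "'a::euclidean_space \<Rightarrow> real"
  assumes sm: "smooth L h" and Lp: "L > 0" and lb: "\<forall>y. m \<le> h y"
  shows "(norm (grad h x))\<^sup>2 \<le> 4 * L * (h x - m)"
proof -
  define G where "G = grad h x"
  define d where "d = - (1 / (2 * L)) *\<^sub>R G"
  define \<psi> where "\<psi> = (\<lambda>t::real. h (x + t *\<^sub>R d) - t * (G \<bullet> d))"
  have hd: "\<And>z. (h has_derivative (\<lambda>k. grad h z \<bullet> k)) (at z)"
    using sm unfolding smooth_def by (blast intro: grad_has_derivative)
  have der: "DERIV \<psi> t :> (grad h (x + t *\<^sub>R d) - G) \<bullet> d" for t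
  proof -
    have l: "((\<lambda>t. x + t *\<^sub>R d) has_derivative (\<lambda>s. s *\<^sub>R d)) (at t)"
      by (auto intro!: derivative_eq_intros)
    have c: "((\<lambda>t. h (x + t *\<^sub>R d)) has_derivative (\<lambda>s. grad h (x + t *\<^sub>R d) \<bullet> (s *\<^sub>R d))) (at t)"
      using has_derivative_compose[OF l hd] by (simp add: o_def)
    have "((\<lambda>t. h (x + t *\<^sub>R d) - t * (G \<bullet> d)) has_derivative
        (\<lambda>s. grad h (x + t *\<^sub>R d) \<bullet> (s *\<^sub>R d) - s * (G \<bullet> d))) (at t)"
      by (rule has_derivative_diff[OF c]) (auto intro!: derivative_eq_intros)
    moreover have "(\<lambda>s. grad h (x + t *\<^sub>R d) \<bullet> (s *\<^sub>R d) - s * (G \<bullet> d)) =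
        (*) ((grad h (x + t *\<^sub>R d) - G) \<bullet> d)"
      by (auto simp: algebra_simps inner_diff_left)
    ultimately show ?thesis unfolding \<psi>_def has_field_derivative_def by simp
  qed
  obtain z where z: "0 < z" "z < 1" "\<psi> 1 - \<psi> 0 = (1 - 0) * ((grad h (x + z *\<^sub>R d) - G) \<bullet> d)"
    using MVT2[of 0 1 \<psi> "\<lambda>t. (grad h (x + t *\<^sub>R d) - G) \<bullet> d"] der by auto
  have "(grad h (x + z *\<^sub>R d) - G) \<bullet> d \<le> norm (grad h (x + z *\<^sub>R d) - G) * norm d"
    by (rule order_trans[OF _ norm_cauchy_schwarz]) simp
  also have "\<dots> \<le> L * norm (x + z *\<^sub>R d - x) * norm d"
    using sm unfolding smooth_def G_def by (intro mult_right_mono) (metis add_diff_cancel_left'[of x "z *\<^sub>R d"], simp)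
  also have "\<dots> = L * z * (norm d)\<^sup>2" using z by (simp add: power2_eq_square)
  also have "\<dots> \<le> L * (norm d)\<^sup>2" using z Lp by (intro mult_right_mono) auto
  finally have "h (x + d) - G \<bullet> d - h x \<le> L * (norm d)\<^sup>2" using z unfolding \<psi>_def by simp
  moreover have "G \<bullet> d = - (norm G)\<^sup>2 / (2 * L)"
    unfolding d_def by (simp add: power2_norm_eq_inner)
  moreover have "(norm d)\<^sup>2 = (norm G)\<^sup>2 / (4 * L\<^sup>2)"
    unfolding d_def using Lp by (simp add: power_divide power_mult_distrib)
  moreover have "m \<le> h (x + d)" using lb by blast
  ultimately have "m \<le> h x - (norm G)\<^sup>2 / (2 * L) + L * ((norm G)\<^sup>2 / (4 * L\<^sup>2))"
  proof -
    assume a1: "h (x + d) - G \<bullet> d - h x \<le> L * (norm d)\<^sup>2" and a2: "G \<bullet> d = - (norm G)\<^sup>2 / (2 * L)"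
      and a3: "(norm d)\<^sup>2 = (norm G)\<^sup>2 / (4 * L\<^sup>2)" and a4: "m \<le> h (x + d)"
    from a1 a3 have "h (x + d) - G \<bullet> d - h x \<le> L * ((norm G)\<^sup>2 / (4 * L\<^sup>2))" by simp
    with a2 a4 show ?thesis by linarith
  qed
  also have "L * ((norm G)\<^sup>2 / (4 * L\<^sup>2)) = (norm G)\<^sup>2 / (4 * L)" using Lp by (simp add: power2_eq_square)
  finally have "(norm G)\<^sup>2 / (4 * L) \<le> h x - m" by simp
  then show ?thesis using Lp unfolding G_def by (simp add: field_simps)
qed


lemma minimizers_same_image:
  fixes g :: "real^'m \<Rightarrow> real" and H :: "real^'p^'m" and f :: "real^'p \<Rightarrow> real"
  assumes f_comp: "\<forall>x. f x = g (H *v x)" and ap: "\<alpha> > 0" and sc: "strongly_convex \<alpha> g"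
    and x: "x \<in> minimizers f" and y: "y \<in> minimizers f"
  shows "H *v x = H *v y"
proof -
  define c where "c = (1/2) *\<^sub>R (H *v x + H *v y)"
  define e where "e = (1/2) *\<^sub>R (H *v x - H *v y)"
  have u: "H *v x = c + e" and w: "H *v y = c - e" unfolding c_def e_def by (simp_all add: scaleR_add_right scaleR_diff_right)
  have hc: "H *v ((1/2) *\<^sub>R (x + y)) = c"
    unfolding c_def by (simp add: matrix_vector_right_distrib matrix_vector_mult_scaleR)
  have fx: "f x \<le> f ((1/2) *\<^sub>R (x + y))" "f x \<le> f y" "f y \<le> f x" using x y unfolding minimizers_def by auto
  have e1: "g (c + e) = f x" using f_comp u by simp
  have e2: "g (c - e) = f y" using f_comp w by simp
  have e3: "g c = f ((1/2) *\<^sub>R (x + y))" using f_comp hc by simp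
  have gc1: "g (c + e) \<le> g c" using fx e1 e3 by simp
  have gc2: "g (c - e) \<le> g c" using fx e2 e3 by simp
  have sc': "\<And>p q. g q \<ge> g p + (q - p) \<bullet> grad g p + \<alpha> / 2 * (norm (q - p))\<^sup>2"
    using sc unfolding strongly_convex_def by blast
  have s1: "g (c + e) \<ge> g c + e \<bullet> grad g c + \<alpha> / 2 * (norm e)\<^sup>2"
    using sc'[of c "c + e"] by simp
  have s2: "g (c - e) \<ge> g c + (- e) \<bullet> grad g c + \<alpha> / 2 * (norm e)\<^sup>2"
    using sc'[of c "c - e"] by simp
  have "\<alpha> * (norm e)\<^sup>2 \<le> 0" using s1 s2 gc1 gc2 by (simp add: inner_minus_left)
  then have "norm e = 0" using ap by (simp add: mult_le_0_iff)
  then show ?thesis using u w by simp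
qed

lemma grad_shift:
  fixes h :: "'a::euclidean_space \<Rightarrow> real"
  assumes d: "h differentiable (at x)" and inv: "\<forall>y. h (y + v) = h y"
  shows "grad h (x + v) = grad h x"
proof -
  have hd: "(h has_derivative (\<lambda>k. grad h x \<bullet> k)) (at x)" using d by (rule grad_has_derivative)
  have l: "((\<lambda>y. y - v) has_derivative (\<lambda>k. k)) (at (x + v))"
    by (auto intro!: derivative_eq_intros)
  have "((\<lambda>y. h (y - v)) has_derivative (\<lambda>k. grad h x \<bullet> k)) (at (x + v))"
    using has_derivative_compose[OF l, of h "\<lambda>k. grad h x \<bullet> k"] hd by simp
  moreover have "(\<lambda>y. h (y - v)) = h"
  proof
    fix y
    have "h (y - v + v) = h (y - v)" using inv by blast
    then show "h (y - v) = h y" by simp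
  qed
  ultimately show ?thesis by (simp add: grad_unique)
qed

theorem lemma2p14:
  fixes n :: nat
    and fi :: "nat \<Rightarrow> real^'p \<Rightarrow> real"
    and L :: "nat \<Rightarrow> real"
    and g :: "real^'m \<Rightarrow> real"
    and H :: "real^'p^'m"
    and \<alpha> Lg :: real
    and f :: "real^'p \<Rightarrow> real"
  assumes n_pos: "n \<ge> 1"
    and L_pos: "\<forall>i\<in>{1..n}. L i > 0"
    and fi_smooth: "\<forall>i\<in>{1..n}. smooth (L i) (fi i)"
    and f_def: "\<forall>x. f x = (1 / real n) * (\<Sum>i=1..n. fi i x)"
    and f_comp: "\<forall>x. f x = g (H *v x)"
    and alpha_pos: "\<alpha> > 0"
    and g_sc: "strongly_convex \<alpha> g"
    and g_smooth: "smooth Lg g"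
    and Xstar_ne: "minimizers f \<noteq> {}"
    and cases: "(\<forall>i\<in>{1..n}. bdd_below (range (fi i))) \<or>
                (\<forall>i\<in>{1..n}. \<forall>x v. H *v v = 0 \<longrightarrow> fi i (x + v) = fi i x)"
  shows "bdd_above ((\<lambda>x. sqrt (\<Sum>j=1..n. (norm (grad (fi j) x))\<^sup>2)) ` minimizers f)"
proof -
  obtain x0 where x0: "x0 \<in> minimizers f" using Xstar_ne by blast
  from cases show ?thesis
  proof
    assume bb: "\<forall>i\<in>{1..n}. bdd_below (range (fi i))"
    define m where "m i = Inf (range (fi i))" for i
    have mlb: "\<forall>y. m i \<le> fi i y" if "i \<in> {1..n}" for i
      using bb that unfolding m_def by (auto intro: cInf_lower)
    define K where "K = real n * f x0 - (\<Sum>k=1..n. m k)"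
    show ?thesis unfolding bdd_above_def
    proof (intro exI ballI)
      fix r assume "r \<in> (\<lambda>x. sqrt (\<Sum>j=1..n. (norm (grad (fi j) x))\<^sup>2)) ` minimizers f"
      then obtain x where x: "x \<in> minimizers f" and r: "r = sqrt (\<Sum>j=1..n. (norm (grad (fi j) x))\<^sup>2)"
        by blast
      have "f x = f x0" using x x0 unfolding minimizers_def by (auto intro: order_antisym)
      then have sx: "(\<Sum>k=1..n. fi k x) = real n * f x0" using f_def n_pos by simp
      have "(norm (grad (fi j) x))\<^sup>2 \<le> 4 * L j * K" if j: "j \<in> {1..n}" for j
      proof -
        have "(norm (grad (fi j) x))\<^sup>2 \<le> 4 * L j * (fi j x - m j)"
          using smooth_grad_bound fi_smooth L_pos mlb j by blast
        also have "fi j x - m j \<le> (\<Sum>k=1..n. fi k x - m k)"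
          by (rule member_le_sum[OF j]) (use mlb in auto)
        also have "\<dots> = K" unfolding K_def using sx by (simp add: sum_subtractf)
        finally show ?thesis using L_pos j by (simp add: mult_left_mono)
      qed
      then have "(\<Sum>j=1..n. (norm (grad (fi j) x))\<^sup>2) \<le> (\<Sum>j=1..n. 4 * L j * K)"
        by (rule sum_mono)
      then show "r \<le> sqrt (\<Sum>j=1..n. 4 * L j * K)" unfolding r by simp
    qed
  next
    assume inv: "\<forall>i\<in>{1..n}. \<forall>x v. H *v v = 0 \<longrightarrow> fi i (x + v) = fi i x"
    have "(\<lambda>x. sqrt (\<Sum>j=1..n. (norm (grad (fi j) x))\<^sup>2)) ` minimizers f
        \<subseteq> {sqrt (\<Sum>j=1..n. (norm (grad (fi j) x0))\<^sup>2)}"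
    proof clarify
      fix x assume x: "x \<in> minimizers f"
      have hv: "H *v (x - x0) = 0"
        using minimizers_same_image[OF f_comp alpha_pos g_sc x x0]
        by (simp add: matrix_vector_mult_diff_distrib)
      have "grad (fi j) x = grad (fi j) x0" if j: "j \<in> {1..n}" for j
      proof -
        have "grad (fi j) (x0 + (x - x0)) = grad (fi j) x0"
          by (rule grad_shift) (use fi_smooth inv hv j in \<open>auto simp: smooth_def\<close>)
        then show ?thesis by simp
      qed
      then show "sqrt (\<Sum>j=1..n. (norm (grad (fi j) x))\<^sup>2) = sqrt (\<Sum>j=1..n. (norm (grad (fi j) x0))\<^sup>2)"
      proof -
        have "(\<Sum>j=1..n. (norm (grad (fi j) x))\<^sup>2) = (\<Sum>j=1..n. (norm (grad (fi j) x0))\<^sup>2)"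
          by (rule sum.cong) (use \<open>\<And>j. j \<in> {1..n} \<Longrightarrow> grad (fi j) x = grad (fi j) x0\<close> in auto)
        then show ?thesis by simp
      qed
    qed
    then show ?thesis by (rule bdd_above_mono[rotated]) simp
  qed
qed

end
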